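(* Let $\mathscr{H}$ be a complex Hilbert space and let $N(\cdot)$ be a norm on $\mathbb{B}(\mathscr{H})$ which is an algebra norm ($N(XY)\leq N(X)N(Y)$ for all $X,Y$) and self-adjoint ($N(X^* )=N(X)$ for all $X$). Then for every $T\in\mathbb{B}(\mathscr{H})$, $$\frac1{16}N(T^*T+TT^* )+\frac12 w_N(T)\,|N(\Re T)-N(\Im T)|\leq w_N^2(T).$$
   Context: For $T\in\mathbb{B}(\mathscr{H})$: $\Re(T)=\frac12(T+T^* )$, $\Im(T)=\frac1{2i}(T-T^* )$, and $w_N(T)=\sup_{\theta\in\mathbb{R}}N(\Re(e^{i\theta}T))$. *)

theory Defs
  imports "HOL-Analysis.Analysis"
begin

text \<open>The inner product is conjugate-linear in the first and linear in the second argument;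
  the norm is the one induced by the inner product and the real scalar multiplication
  is the restriction of the complex one. A complex Hilbert space is a type of class
  complex_inner that is also complete_space.\<close>

class complex_inner = real_normed_vector +
  fixes scaleC :: "complex \<Rightarrow> 'a \<Rightarrow> 'a"
    and cinner :: "'a \<Rightarrow> 'a \<Rightarrow> complex"
  assumes scaleC_add_right: "scaleC a (x + y) = scaleC a x + scaleC a y"
    and scaleC_add_left: "scaleC (a + b) x = scaleC a x + scaleC b x"
    and scaleC_scaleC: "scaleC a (scaleC b x) = scaleC (a * b) x"
    and scaleC_one: "scaleC 1 x = x"
    and scaleR_scaleC: "scaleR r x = scaleC (complex_of_real r) x"
    and cinner_conj: "cinner x y = cnj (cinner y x)"
    and cinner_add_right: "cinner x (y + z) = cinner x y + cinner x z"
    and cinner_scaleC_right: "cinner x (scaleC a y) = a * cinner x y"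
    and cinner_self_real: "Im (cinner x x) = 0"
    and cinner_self_nonneg: "0 \<le> Re (cinner x x)"
    and cinner_self_eq_zero: "cinner x x = 0 \<longleftrightarrow> x = 0"
    and norm_cinner: "norm x = sqrt (Re (cinner x x))"

definition bounded_ops :: "('a::complex_inner \<Rightarrow> 'a) set" where
  "bounded_ops = {T. (\<forall>x y. T (x + y) = T x + T y) \<and>
                     (\<forall>c x. T (scaleC c x) = scaleC c (T x)) \<and>
                     (\<exists>K. \<forall>x. norm (T x) \<le> K * norm x)}"

definition adj :: "('a::complex_inner \<Rightarrow> 'a) \<Rightarrow> ('a \<Rightarrow> 'a)" where
  "adj T = (SOME S. \<forall>x y. cinner (T x) y = cinner x (S y))"

definition op_scale :: "complex \<Rightarrow> ('a::complex_inner \<Rightarrow> 'a) \<Rightarrow> ('a \<Rightarrow> 'a)" where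
  "op_scale c T = (\<lambda>x. scaleC c (T x))"

definition op_add :: "('a::complex_inner \<Rightarrow> 'a) \<Rightarrow> ('a \<Rightarrow> 'a) \<Rightarrow> ('a \<Rightarrow> 'a)" where
  "op_add S T = (\<lambda>x. S x + T x)"

definition ReOp :: "('a::complex_inner \<Rightarrow> 'a) \<Rightarrow> ('a \<Rightarrow> 'a)" where
  "ReOp T = (\<lambda>x. scaleC (1/2) (T x + adj T x))"

definition ImOp :: "('a::complex_inner \<Rightarrow> 'a) \<Rightarrow> ('a \<Rightarrow> 'a)" where
  "ImOp T = (\<lambda>x. scaleC (1 / (2 * \<i>)) (T x - adj T x))"

definition is_norm_on_BH :: "(('a::complex_inner \<Rightarrow> 'a) \<Rightarrow> real) \<Rightarrow> bool" where
  "is_norm_on_BH N \<longleftrightarrow>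
     (\<forall>X\<in>bounded_ops. 0 \<le> N X) \<and>
     (\<forall>X\<in>bounded_ops. N X = 0 \<longleftrightarrow> X = (\<lambda>x. 0)) \<and>
     (\<forall>c. \<forall>X\<in>bounded_ops. N (op_scale c X) = norm c * N X) \<and>
     (\<forall>X\<in>bounded_ops. \<forall>Y\<in>bounded_ops. N (op_add X Y) \<le> N X + N Y)"

definition wN :: "(('a::complex_inner \<Rightarrow> 'a) \<Rightarrow> real) \<Rightarrow> ('a \<Rightarrow> 'a) \<Rightarrow> real" where
  "wN N T = (SUP \<theta>\<in>(UNIV::real set). N (ReOp (op_scale (exp (\<i> * of_real \<theta>)) T)))"

end

theory Submission
  imports Defs
begin

lemma cinner_add_left: "cinner (x + y) z = cinner x z + cinner (y::'a::complex_inner) z"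
  by (metis cinner_conj cinner_add_right complex_cnj_add)

lemma cinner_scaleC_left: "cinner (scaleC a x) (y::'a::complex_inner) = cnj a * cinner x y"
  by (metis cinner_conj cinner_scaleC_right complex_cnj_mult)

lemma cinner_zero_right[simp]: "cinner (x::'a::complex_inner) 0 = 0"
  by (metis add.right_neutral add_cancel_right_right cinner_add_right)

lemma cinner_zero_left[simp]: "cinner 0 (x::'a::complex_inner) = 0"
  by (metis cinner_conj cinner_zero_right complex_cnj_zero)

lemma scaleC_minus1: "scaleC (-1) (x::'a::complex_inner) = - x"
  by (metis of_real_1 of_real_minus scaleR_minus1_left scaleR_scaleC)

lemma cinner_minus_right[simp]: "cinner x (- y) = - cinner (x::'a::complex_inner) y"
  by (metis cinner_scaleC_right mult_minus1 scaleC_minus1)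

lemma cinner_minus_left[simp]: "cinner (- x) y = - cinner (x::'a::complex_inner) y"
  by (metis cinner_conj cinner_minus_right complex_cnj_minus)

lemma cinner_diff_right[simp]: "cinner x (y - z) = cinner x y - cinner (x::'a::complex_inner) z"
  by (metis cinner_add_right cinner_minus_right diff_conv_add_uminus)

lemma cinner_diff_left[simp]: "cinner (y - z) x = cinner y x - cinner z (x::'a::complex_inner)"
  by (metis cinner_add_left cinner_minus_left diff_conv_add_uminus)

lemmas cinner_simps[simp] = cinner_add_left cinner_add_right cinner_scaleC_left cinner_scaleC_right

lemma cinner_self: "cinner x x = complex_of_real ((norm (x::'a::complex_inner))^2)"
  by (simp add: norm_cinner cinner_self_nonneg complex_eq_iff cinner_self_real)

lemma cinner_ext: "(\<And>z. cinner z x = cinner z y) \<Longrightarrow> x = (y::'a::complex_inner)"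
  by (metis cinner_diff_right cinner_self_eq_zero right_minus_eq)

lemma mult_cnj_sq: "c * cnj c = (complex_of_real (cmod c))^2" "cnj c * c = (complex_of_real (cmod c))^2"
  by (metis complex_norm_square of_real_power mult.commute)+

lemma norm_sq_Re: "(norm x)^2 = Re (cinner x (x::'a::complex_inner))"
  by (simp add: cinner_self)

lemma norm_scaleC: "norm (scaleC c (x::'a::complex_inner)) = cmod c * norm x"
proof -
  have "cinner (scaleC c x) (scaleC c x) = (complex_of_real (cmod c))^2 * cinner x x"
    by (simp add: mult.assoc[symmetric] mult_cnj_sq)
  then have "Re (cinner (scaleC c x) (scaleC c x)) = (cmod c)^2 * Re (cinner x x)"
    by (simp only: of_real_power[symmetric]) simp
  then have "(norm (scaleC c x))^2 = (cmod c * norm x)^2"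
    by (simp add: norm_sq_Re power_mult_distrib)
  then show ?thesis by (simp add: power2_eq_iff_nonneg)
qed

lemma scaleC_zero_right[simp]: "scaleC c (0::'a::complex_inner) = 0"
  by (metis add_cancel_right_right scaleC_add_right)

lemma scaleC_zero_left[simp]: "scaleC 0 (x::'a::complex_inner) = 0"
  by (metis of_real_0 scaleR_scaleC scale_zero_left)

lemma Re_cinner_sym: "Re (cinner y x) = Re (cinner x (y::'a::complex_inner))"
  by (subst cinner_conj) simp

lemma norm_add_sq: "(norm (x + y))^2 = (norm x)^2 + (norm y)^2 + 2 * Re (cinner x (y::'a::complex_inner))"
proof -
  have "cinner (x+y) (x+y) = cinner x x + cinner y y + (cinner x y + cinner y x)"
    by simp
  also have "cinner x y + cinner y x = complex_of_real (2 * Re (cinner x y))"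
    by (subst cinner_conj[of y x]) (simp add: complex_add_cnj)
  finally show ?thesis by (simp add: norm_sq_Re Re_cinner_sym)
qed

lemma cauchy_schwarz: "cmod (cinner x y) \<le> norm x * norm (y::'a::complex_inner)"
proof (cases "x = 0")
  case True then show ?thesis by simp
next
  case False
  define a where "a = (norm x)^2"
  define c where "c = cinner x y"
  have a0: "a > 0" using False by (simp add: a_def)
  define v where "v = y - scaleC (c / complex_of_real a) x"
  have "cinner v v = cinner y y - (c / a) * cinner y x - cnj (c/a) * cinner x y
      + cnj (c/a) * (c/a) * cinner x x"
    by (simp add: v_def algebra_simps)
  also have "\<dots> = complex_of_real ((norm y)^2 - (cmod c)^2 / a)"
    using a0 by (simp add: cinner_self c_def[symmetric] a_def[symmetric] cinner_conj[of y x]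
      mult_cnj_sq field_simps)
  finally have "0 \<le> (norm y)^2 - (cmod c)^2 / a"
    by (metis Re_complex_of_real cinner_self zero_le_power2)
  then have "(cmod c)^2 \<le> (norm x * norm y)^2"
    using a0 by (simp add: a_def field_simps power_mult_distrib)
  then show ?thesis unfolding c_def
    by (meson mult_nonneg_nonneg norm_ge_zero power2_le_imp_le)
qed

lemma riesz:
  fixes g :: "'a::{complex_inner,complete_space} \<Rightarrow> complex"
  assumes add: "\<And>x y. g (x + y) = g x + g y"
    and sc: "\<And>c x. g (scaleC c x) = c * g x"
    and bd: "\<And>x. cmod (g x) \<le> K * norm x"
  shows "\<exists>z. \<forall>x. g x = cinner z x"
proof (cases "\<forall>x. g x = 0")
  case True then show ?thesis by (intro exI[of _ 0]) simp
next
  case False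
  then obtain u where u: "g u \<noteq> 0" by blast
  have g0: "g 0 = 0" using add[of 0 0] by simp
  have gdiff: "g (x - y) = g x - g y" for x y
    using add[of x "-y"] sc[of "-1" y] by (simp add: scaleC_minus1)
  define C where "C = {x. g x = 1}"
  have uC: "scaleC (1 / g u) u \<in> C" using u by (simp add: C_def sc)
  define d where "d = Inf (norm ` C)"
  have bdd: "bdd_below (norm ` C)" by (rule bdd_belowI[of _ 0]) auto
  have d_le: "d \<le> norm y" if "y \<in> C" for y
    unfolding d_def using bdd that by (simp add: cInf_lower)
  have d0: "0 \<le> d" unfolding d_def using uC by (intro cInf_greatest) auto
  have "\<exists>y. y \<in> C \<and> norm y < d + inverse (real (Suc n))" for n
  proof -
    have "Inf (norm ` C) < d + inverse (real (Suc n))" by (simp add: d_def)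
    then obtain r where "r \<in> norm ` C" "r < d + inverse (real (Suc n))"
      using cInf_lessD[of "norm ` C"] uC by blast
    then show ?thesis by auto
  qed
  then obtain xs where xsC: "\<And>n. xs n \<in> C" and xsn: "\<And>n. norm (xs n) < d + inverse (real (Suc n))"
    by metis
  define e where "e = (\<lambda>n. (2*d+1) * inverse (real (Suc n)))"
  have sq_bd: "(norm (xs n))^2 \<le> d^2 + e n" for n
  proof -
    have i0: "0 < inverse (real (Suc n))" "inverse (real (Suc n)) \<le> 1" by (auto simp: inverse_le_1_iff)
    have "(norm (xs n))^2 \<le> (d + inverse (real (Suc n)))^2"
      using xsn[of n] by (intro power_mono) auto
    also have "\<dots> = d^2 + 2*d*inverse (real (Suc n)) + inverse (real (Suc n)) * inverse (real (Suc n))"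
      by (simp add: power2_eq_square algebra_simps)
    also have "\<dots> \<le> d^2 + e n"
    proof -
      have "inverse (real (Suc n)) * inverse (real (Suc n)) \<le> inverse (real (Suc n))"
        using i0 by (simp add: mult_left_le)
      then show ?thesis by (simp add: e_def distrib_right)
    qed
    finally show ?thesis .
  qed
  have para: "(norm (xs n - xs m))^2 \<le> 2 * e n + 2 * e m" for n m
  proof -
    have mid: "scaleC (1/2) (xs n + xs m) \<in> C" using xsC[of n] xsC[of m]
      by (simp add: C_def sc add)
    have "d \<le> norm (scaleC (1/2) (xs n + xs m))" using d_le[OF mid] .
    then have "2 * d \<le> norm (xs n + xs m)" by (simp add: norm_scaleC)
    then have "(2 * d)^2 \<le> (norm (xs n + xs m))^2"
      using d0 by (intro power_mono) auto
    then have "4 * d^2 \<le> (norm (xs n + xs m))^2" by (simp add: power_mult_distrib)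
    moreover have "(norm (xs n + xs m))^2 + (norm (xs n - xs m))^2 = 2*(norm (xs n))^2 + 2*(norm (xs m))^2"
      using norm_add_sq[of "xs n" "xs m"] norm_add_sq[of "xs n" "- xs m"]
      by (simp add: Re_cinner_sym)
    ultimately show ?thesis using sq_bd[of n] sq_bd[of m] by linarith
  qed
  have "Cauchy xs"
  proof (rule metric_CauchyI)
    fix r :: real assume r: "r > 0"
    obtain M0 where M0: "(2*d+1) / (r^2/4) < real M0"
      using reals_Archimedean2 by blast
    define M where "M = M0"
    have M: "(2*d+1) / (r^2/4) < real (Suc M)" using M0 unfolding M_def by simp
    have eM: "e n < r^2/4" if "n \<ge> M" for n
    proof -
      have "(2*d+1) < real (Suc M) * (r^2/4)" using M r by (simp add: field_simps)
      also have "\<dots> \<le> real (Suc n) * (r^2/4)" using that r by (intro mult_right_mono) auto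
      finally show ?thesis by (simp add: e_def field_simps)
    qed
    show "\<exists>M. \<forall>m\<ge>M. \<forall>n\<ge>M. dist (xs m) (xs n) < r"
    proof (intro exI allI impI)
      fix m n assume "M \<le> m" "M \<le> n"
      then have "(norm (xs m - xs n))^2 < r^2" using para[of m n] eM[of m] eM[of n] by linarith
      then show "dist (xs m) (xs n) < r" using r by (simp add: dist_norm power2_less_imp_less)
    qed
  qed
  then obtain x0 where lim: "xs \<longlonglongrightarrow> x0" using Cauchy_convergent convergent_def by blast
  have glim: "(\<lambda>n. g (xs n)) \<longlonglongrightarrow> g x0"
  proof -
    have "(\<lambda>n. K * norm (xs n - x0)) \<longlonglongrightarrow> K * 0"
      using lim by (intro tendsto_mult tendsto_const) (simp add: LIM_zero_iff tendsto_norm_zero)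
    then have K0: "(\<lambda>n. K * norm (xs n - x0)) \<longlonglongrightarrow> 0" by simp
    have "\<forall>n. cmod (g (xs n) - g x0) \<le> K * norm (xs n - x0)" by (simp add: bd flip: gdiff)
    then have "(\<lambda>n. g (xs n) - g x0) \<longlonglongrightarrow> 0"
      by (intro Lim_null_comparison[OF always_eventually K0]) 
    then show ?thesis by (simp add: LIM_zero_iff)
  qed
  have gx0: "g x0 = 1"
  proof -
    have "(\<lambda>n. g (xs n)) \<longlonglongrightarrow> 1" using xsC by (simp add: C_def)
    then show ?thesis using glim LIMSEQ_unique by blast
  qed
  have x0min: "norm x0 \<le> norm y" if "y \<in> C" for y
  proof -
    have "(\<lambda>n. d + inverse (real (Suc n))) \<longlonglongrightarrow> d + 0"
      by (intro tendsto_add tendsto_const LIMSEQ_inverse_real_of_nat)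
    then have "norm x0 \<le> d"
      using tendsto_norm[OF lim] xsn by (intro LIMSEQ_le) (auto intro: less_imp_le)
    then show ?thesis using d_le[OF that] by linarith
  qed
  have orth: "cinner x0 m = 0" if gm: "g m = 0" for m
  proof (rule ccontr)
    assume cne: "cinner x0 m \<noteq> 0"
    define c where "c = cinner x0 m"
    define s where "s = inverse ((norm m)^2 + 1)"
    have m0: "0 < (norm m)^2 + 1" by (simp add: add_nonneg_pos)
    have s0: "s > 0" using m0 by (simp add: s_def)
    have sm: "s * (norm m)^2 < 1" using m0 by (simp add: s_def field_simps)
    define t where "t = - complex_of_real s * cnj c"
    have yC: "x0 + scaleC t m \<in> C" using gx0 gm by (simp add: C_def add sc)
    have tc: "t * c = - complex_of_real (s * (cmod c)^2)"
      by (simp add: t_def mult_cnj_sq)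
    have "(norm (x0 + scaleC t m))^2 = (norm x0)^2 + (cmod t * norm m)^2 + 2 * Re (t * c)"
      by (simp add: norm_add_sq norm_scaleC c_def)
    also have "\<dots> = (norm x0)^2 + (cmod c)^2 * s * (s * (norm m)^2 - 2)"
    proof -
      have ct: "cmod t = s * cmod c" using s0 by (simp add: t_def norm_mult)
      show ?thesis by (simp only: tc ct) (simp add: algebra_simps power2_eq_square)
    qed
    also have "\<dots> < (norm x0)^2"
    proof -
      have "(cmod c)^2 * s > 0" using cne s0 by (simp add: c_def)
      moreover have "s * (norm m)^2 - 2 < 0" using sm by linarith
      ultimately show ?thesis by (simp add: mult_pos_neg)
    qed
    finally have "norm (x0 + scaleC t m) < norm x0"
      by (simp add: power2_less_imp_less)
    then show False using x0min[OF yC] by linarith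
  qed
  have x0ne: "cinner x0 x0 \<noteq> 0" using gx0 g0 by (auto simp: cinner_self_eq_zero)
  show ?thesis
  proof (intro exI allI)
    fix x
    have "g (x - scaleC (g x) x0) = 0" by (simp add: gdiff sc gx0)
    then have "cinner x0 (x - scaleC (g x) x0) = 0" by (rule orth)
    then have "cinner x0 x = g x * cinner x0 x0" by simp
    then show "g x = cinner (scaleC (cnj (1 / cinner x0 x0)) x0) x"
      using x0ne by (simp add: field_simps)
  qed
qed

lemma scaleC_minus_right: "scaleC c (- x) = - scaleC c (x::'a::complex_inner)"
  by (metis add_eq_0_iff scaleC_add_right scaleC_zero_right)

lemma scaleC_diff_right: "scaleC c (x - y) = scaleC c x - scaleC c (y::'a::complex_inner)"
  by (metis diff_conv_add_uminus scaleC_add_right scaleC_minus_right)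

lemma bo_add: "X \<in> bounded_ops \<Longrightarrow> X (u + v) = X u + X v"
  by (simp add: bounded_ops_def)
lemma bo_scale: "X \<in> bounded_ops \<Longrightarrow> X (scaleC c u) = scaleC c (X u)"
  by (simp add: bounded_ops_def)
lemma bo_minus: "X \<in> bounded_ops \<Longrightarrow> X (- u) = - X (u::'a::complex_inner)"
  by (metis bo_scale scaleC_minus1)
lemma bo_diff: "X \<in> bounded_ops \<Longrightarrow> X (u - v) = X u - X (v::'a::complex_inner)"
  by (metis bo_add bo_minus diff_conv_add_uminus)
lemma bo_bound: "X \<in> bounded_ops \<Longrightarrow> \<exists>K\<ge>0. \<forall>x. norm (X x) \<le> K * norm x"
proof -
  assume "X \<in> bounded_ops"
  then obtain K where K: "\<forall>x. norm (X x) \<le> K * norm x" by (auto simp: bounded_ops_def)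
  have "norm (X x) \<le> max K 0 * norm x" for x
    using K[rule_format, of x] by (metis max.cobounded1 mult_right_mono norm_ge_zero order_trans)
  then show ?thesis by (intro exI[of _ "max K 0"]) auto
qed

lemma bo_intro:
  assumes "\<And>u v. X (u + v) = X u + X v" "\<And>c u. X (scaleC c u) = scaleC c (X u)"
    "\<And>x. norm (X x) \<le> K * norm x"
  shows "X \<in> bounded_ops"
  using assms by (auto simp: bounded_ops_def)

lemma op_add_bo: "X \<in> bounded_ops \<Longrightarrow> Y \<in> bounded_ops \<Longrightarrow> op_add X Y \<in> bounded_ops"
proof -
  assume X: "X \<in> bounded_ops" and Y: "Y \<in> bounded_ops"
  obtain K where K: "\<forall>x. norm (X x) \<le> K * norm x" using bo_bound[OF X] by auto
  obtain L where L: "\<forall>x. norm (Y x) \<le> L * norm x" using bo_bound[OF Y] by auto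
  show ?thesis
  proof (rule bo_intro[where K="K+L"])
    fix x show "norm (op_add X Y x) \<le> (K + L) * norm x"
      unfolding op_add_def using K L norm_triangle_ineq[of "X x" "Y x"]
      by (smt (verit, best) distrib_right)
  qed (auto simp: op_add_def bo_add[OF X] bo_add[OF Y] bo_scale[OF X] bo_scale[OF Y] scaleC_add_right)
qed

lemma op_scale_bo: "X \<in> bounded_ops \<Longrightarrow> op_scale c X \<in> bounded_ops"
proof -
  assume X: "X \<in> bounded_ops"
  obtain K where K: "\<forall>x. norm (X x) \<le> K * norm x" using bo_bound[OF X] by auto
  show ?thesis
  proof (rule bo_intro[where K="cmod c * K"])
    fix x show "norm (op_scale c X x) \<le> (cmod c * K) * norm x"
      unfolding op_scale_def using K by (simp add: norm_scaleC mult.assoc mult_left_mono)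
  qed (auto simp: op_scale_def bo_add[OF X] bo_scale[OF X] scaleC_add_right scaleC_scaleC mult.commute)
qed

lemma comp_bo: "X \<in> bounded_ops \<Longrightarrow> Y \<in> bounded_ops \<Longrightarrow> X \<circ> Y \<in> bounded_ops"
proof -
  assume X: "X \<in> bounded_ops" and Y: "Y \<in> bounded_ops"
  obtain K where K: "K \<ge> 0" "\<forall>x. norm (X x) \<le> K * norm x" using bo_bound[OF X] by auto
  obtain L where L: "\<forall>x. norm (Y x) \<le> L * norm x" using bo_bound[OF Y] by auto
  show ?thesis
  proof (rule bo_intro[where K="K * L"])
    fix x have "norm (X (Y x)) \<le> K * norm (Y x)" using K by auto
    also have "\<dots> \<le> K * (L * norm x)" using K L by (simp add: mult_left_mono)
    finally show "norm ((X \<circ> Y) x) \<le> (K * L) * norm x" by (simp add: mult.assoc)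
  qed (auto simp: bo_add[OF X] bo_add[OF Y] bo_scale[OF X] bo_scale[OF Y])
qed

lemma adj_exists:
  fixes X :: "'a::{complex_inner,complete_space} \<Rightarrow> 'a"
  assumes X: "X \<in> bounded_ops"
  shows "\<exists>S. \<forall>x y. cinner (X x) y = cinner x (S y)"
proof -
  obtain K where K: "K \<ge> 0" "\<forall>x. norm (X x) \<le> K * norm x" using bo_bound[OF X] by auto
  have "\<exists>z. \<forall>x. cinner y (X x) = cinner z x" for y
  proof (rule riesz[where K="norm y * K"])
    fix x
    have "cmod (cinner y (X x)) \<le> norm y * norm (X x)" by (rule cauchy_schwarz)
    also have "\<dots> \<le> norm y * (K * norm x)" using K by (simp add: mult_left_mono)
    finally show "cmod (cinner y (X x)) \<le> norm y * K * norm x" by (simp add: mult.assoc)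
  qed (simp_all add: bo_add[OF X] bo_scale[OF X])
  then obtain S where S: "\<forall>y x. cinner y (X x) = cinner (S y) x" by metis
  show ?thesis
  proof (intro exI allI)
    fix x y show "cinner (X x) y = cinner x (S y)"
      by (metis S cinner_conj)
  qed
qed

lemma adj_prop:
  fixes X :: "'a::{complex_inner,complete_space} \<Rightarrow> 'a"
  assumes X: "X \<in> bounded_ops"
  shows "cinner (X x) y = cinner x (adj X y)"
proof -
  have "\<forall>x y. cinner (X x) y = cinner x (adj X y)"
    unfolding adj_def using adj_exists[OF X] by (rule someI_ex)
  then show ?thesis by blast
qed

lemma adj_unique:
  fixes X :: "'a::{complex_inner,complete_space} \<Rightarrow> 'a"
  assumes X: "X \<in> bounded_ops" and S: "\<And>x y. cinner (X x) y = cinner x (S y)"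
  shows "adj X = S"
proof
  fix y show "adj X y = S y"
    by (rule cinner_ext) (metis S adj_prop[OF X])
qed

lemma adj_bo:
  fixes X :: "'a::{complex_inner,complete_space} \<Rightarrow> 'a"
  assumes X: "X \<in> bounded_ops"
  shows "adj X \<in> bounded_ops"
proof -
  obtain K where K: "K \<ge> 0" "\<forall>x. norm (X x) \<le> K * norm x" using bo_bound[OF X] by auto
  show ?thesis
  proof (rule bo_intro[where K=K])
    fix u v show "adj X (u + v) = adj X u + adj X v"
      by (rule cinner_ext) (simp flip: adj_prop[OF X])
  next
    fix c u show "adj X (scaleC c u) = scaleC c (adj X u)"
      by (rule cinner_ext) (simp flip: adj_prop[OF X])
  next
    fix y
    let ?s = "adj X y"
    have "(norm ?s)^2 = Re (cinner (X ?s) y)" by (simp add: norm_sq_Re adj_prop[OF X])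
    also have "\<dots> \<le> cmod (cinner (X ?s) y)" by (rule complex_Re_le_cmod)
    also have "\<dots> \<le> norm (X ?s) * norm y" by (rule cauchy_schwarz)
    also have "\<dots> \<le> K * norm ?s * norm y" using K by (simp add: mult_right_mono)
    finally have h: "norm ?s * norm ?s \<le> norm ?s * (K * norm y)"
      by (simp add: power2_eq_square algebra_simps)
    show "norm ?s \<le> K * norm y"
    proof (cases "norm ?s = 0")
      case True then show ?thesis using K by simp
    next
      case False
      then have "norm ?s > 0" by simp
      then show ?thesis using h mult_le_cancel_left_pos by blast
    qed
  qed
qed

lemma adj_scale:
  fixes X :: "'a::{complex_inner,complete_space} \<Rightarrow> 'a"
  assumes X: "X \<in> bounded_ops"
  shows "adj (op_scale c X) = op_scale (cnj c) (adj X)"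
  by (rule adj_unique[OF op_scale_bo[OF X]]) (simp add: op_scale_def adj_prop[OF X])

lemma exp_mhalfpi: "exp (\<i> * complex_of_real (- pi / 2)) = - \<i>"
proof -
  have "cis (- pi / 2) = - \<i>" by (simp add: complex_eq_iff)
  then show ?thesis by (simp add: cis_conv_exp)
qed

lemma lin_aux:
  fixes X AA BB WA WB WW :: real
  assumes "BB \<le> WB" "AA \<le> WA" "WA \<le> WW" "WB \<le> WW" "0 \<le> WA" "0 \<le> WB" "X \<le> 2 * (AA + BB)"
  shows "1/16 * X + (WB - WA)/2 \<le> WW"
  using assms by argo

lemma final_arith:
  fixes a b w X :: real
  assumes "0 \<le> a" "0 \<le> b" "a \<le> w" "b \<le> w" "X \<le> 2 * (a * a + b * b)"
  shows "1/16 * X + 1/2 * w * \<bar>a - b\<bar> \<le> w^2"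
proof -
  have f1: "b * b \<le> w * b" "a * a \<le> w * a" "w * a \<le> w * w" "w * b \<le> w * w"
    using assms by (auto intro: mult_mono)
  have f2: "0 \<le> w * a" "0 \<le> w * b" using assms by auto
  show ?thesis
  proof (cases "a \<le> b")
    case True
    then have e: "1/2 * w * \<bar>a - b\<bar> = (w*b - w*a)/2" by (simp add: algebra_simps)
    have "1/16 * X + (w*b - w*a)/2 \<le> w * w" by (rule lin_aux) (use f1 f2 assms in auto)
    then show ?thesis unfolding power2_eq_square e .
  next
    case False
    then have e: "1/2 * w * \<bar>a - b\<bar> = (w*a - w*b)/2" by (simp add: algebra_simps)
    have "1/16 * X + (w*a - w*b)/2 \<le> w * w" by (rule lin_aux[where AA="b*b" and BB="a*a"]) (use f1 f2 assms in auto)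
    then show ?thesis unfolding power2_eq_square e .
  qed
qed

theorem corollary2p17:
  fixes N :: "('a::{complex_inner, complete_space} \<Rightarrow> 'a) \<Rightarrow> real"
    and T :: "'a \<Rightarrow> 'a"
  assumes norm: "is_norm_on_BH N"
    and algebra_norm: "\<forall>X\<in>bounded_ops. \<forall>Y\<in>bounded_ops. N (X \<circ> Y) \<le> N X * N Y"
    and selfadjoint_norm: "\<forall>X\<in>bounded_ops. N (adj X) = N X"
    and T: "T \<in> bounded_ops"
  shows "1/16 * N (op_add (adj T \<circ> T) (T \<circ> adj T))
           + 1/2 * wN N T * \<bar>N (ReOp T) - N (ImOp T)\<bar> \<le> (wN N T)\<^sup>2"
proof -
  define S where "S = adj T"
  have S: "S \<in> bounded_ops" unfolding S_def by (rule adj_bo[OF T])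
  have Nnn: "\<And>X. X \<in> bounded_ops \<Longrightarrow> 0 \<le> N X"
    and Nsc: "\<And>c X. X \<in> bounded_ops \<Longrightarrow> N (op_scale c X) = cmod c * N X"
    and Ntri: "\<And>X Y. X \<in> bounded_ops \<Longrightarrow> Y \<in> bounded_ops \<Longrightarrow> N (op_add X Y) \<le> N X + N Y"
    using norm unfolding is_norm_on_BH_def by blast+
  have hA: "ReOp T = op_scale (1/2) (op_add T S)"
    by (simp add: ReOp_def op_scale_def op_add_def S_def)
  have hB: "ImOp T = op_scale (1/(2*\<i>)) (op_add T (op_scale (-1) S))"
    by (simp add: ImOp_def op_scale_def op_add_def S_def scaleC_minus1)
  have A: "ReOp T \<in> bounded_ops" unfolding hA by (intro op_scale_bo op_add_bo T S)
  have B: "ImOp T \<in> bounded_ops" unfolding hB by (intro op_scale_bo op_add_bo T S)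
  define f where "f = (\<lambda>\<theta>::real. N (ReOp (op_scale (exp (\<i> * of_real \<theta>)) T)))"
  have fle: "f \<theta> \<le> N T" for \<theta>
  proof -
    let ?c = "exp (\<i> * complex_of_real \<theta>)"
    have c1: "cmod ?c = 1" by (rule norm_exp_i_times)
    have cT: "op_scale ?c T \<in> bounded_ops" by (rule op_scale_bo[OF T])
    have "ReOp (op_scale ?c T) = op_scale (1/2) (op_add (op_scale ?c T) (adj (op_scale ?c T)))"
      by (simp add: ReOp_def op_scale_def op_add_def)
    then have "f \<theta> = 1/2 * N (op_add (op_scale ?c T) (adj (op_scale ?c T)))"
      unfolding f_def by (simp add: Nsc op_add_bo cT adj_bo)
    also have "\<dots> \<le> 1/2 * (N (op_scale ?c T) + N (adj (op_scale ?c T)))"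
      using Ntri[OF cT adj_bo[OF cT]] by simp
    also have "\<dots> = N T" using selfadjoint_norm cT by (simp add: Nsc[OF T] c1)
    finally show ?thesis .
  qed
  have bdd: "bdd_above (range f)" using fle by (intro bdd_aboveI) auto
  have wN_eq: "wN N T = (SUP \<theta>\<in>UNIV. f \<theta>)" by (simp add: wN_def f_def)
  have fw: "f \<theta> \<le> wN N T" for \<theta> unfolding wN_eq by (rule cSUP_upper[OF _ bdd]) simp
  have NA: "N (ReOp T) \<le> wN N T"
  proof -
    have "op_scale (exp (\<i> * complex_of_real 0)) T = T" by (simp add: op_scale_def scaleC_one)
    then show ?thesis using fw[of 0] by (simp add: f_def)
  qed
  have NB: "N (ImOp T) \<le> wN N T"
  proof -
    have "ReOp (op_scale (exp (\<i> * complex_of_real (- pi / 2))) T) = ImOp T"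
    proof
      fix x
      show "ReOp (op_scale (exp (\<i> * complex_of_real (- pi / 2))) T) x = ImOp T x"
        unfolding exp_mhalfpi ReOp_def ImOp_def adj_scale[OF T]
        by (rule cinner_ext) (simp add: op_scale_def field_simps)
    qed
    then show ?thesis using fw[of "- pi / 2"] by (simp add: f_def)
  qed
  have ident: "op_add (adj T \<circ> T) (T \<circ> adj T) = op_scale 2 (op_add (ReOp T \<circ> ReOp T) (ImOp T \<circ> ImOp T))"
  proof
    fix x
    show "op_add (adj T \<circ> T) (T \<circ> adj T) x = op_scale 2 (op_add (ReOp T \<circ> ReOp T) (ImOp T \<circ> ImOp T)) x"
      unfolding S_def[symmetric]
      by (rule cinner_ext) (simp add: op_scale_def op_add_def ReOp_def ImOp_def S_def[symmetric]
          bo_add[OF T] bo_add[OF S] bo_scale[OF T] bo_scale[OF S] bo_diff[OF T] bo_diff[OF S] field_simps)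
  qed
  have AA: "ReOp T \<circ> ReOp T \<in> bounded_ops" by (intro comp_bo A)
  have BB: "ImOp T \<circ> ImOp T \<in> bounded_ops" by (intro comp_bo B)
  have "N (op_add (adj T \<circ> T) (T \<circ> adj T)) = 2 * N (op_add (ReOp T \<circ> ReOp T) (ImOp T \<circ> ImOp T))"
    unfolding ident using Nsc[OF op_add_bo[OF AA BB], of 2] by simp
  also have "\<dots> \<le> 2 * (N (ReOp T \<circ> ReOp T) + N (ImOp T \<circ> ImOp T))"
    using Ntri[OF AA BB] by simp
  also have "\<dots> \<le> 2 * (N (ReOp T) * N (ReOp T) + N (ImOp T) * N (ImOp T))"
    using algebra_norm A B by (smt (verit))
  finally have X: "N (op_add (adj T \<circ> T) (T \<circ> adj T)) \<le> 2 * (N (ReOp T) * N (ReOp T) + N (ImOp T) * N (ImOp T))" .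
  show ?thesis by (rule final_arith[OF Nnn[OF A] Nnn[OF B] NA NB X])
qed

end
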